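(* Let $R$ be a Noetherian ring and $J_1,J_2\subseteq I$ ideals. Assume that the pair of image ideals $\overline{J_2}\subseteq\overline I$ in $\overline R=R/J_1$ is Aluffi torsion-free. Suppose there is a minimal generating set $f_1,\ldots,f_s$ of $J_1$ such that (1) $J_1=(f_1,\ldots,f_s)\subseteq I$ is strongly Aluffi torsion-free, and (2) the images $\widetilde{f_1},\ldots,\widetilde{f_s}$ form a regular sequence in $\widetilde R=R/J_2$. Then the pair $J_2\subseteq I$ is Aluffi torsion-free.
   Context: A pair of ideals $J\subseteq I$ in a ring $R$ is called Aluffi torsion-free if $J\cap I^n=JI^{n-1}$ for all $n\ge1$ (with $I^0=R$). For an ideal $J=(f_1,\ldots,f_t)\subseteq I$ with given ordered generators, the pair is called strongly Aluffi torsion-free if $(f_1,\ldots,f_i)\subseteq I$ is Aluffi torsion-free for each $i=1,\ldots,t$. *)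

theory Defs
  imports "HOL-Algebra.Algebra"
begin

fun ideal_pow :: "('a, 'b) ring_scheme \<Rightarrow> 'a set \<Rightarrow> nat \<Rightarrow> 'a set" where
  "ideal_pow R I 0 = carrier R"
| "ideal_pow R I (Suc n) = ideal_prod R I (ideal_pow R I n)"

definition aluffi_torsion_free :: "('a, 'b) ring_scheme \<Rightarrow> 'a set \<Rightarrow> 'a set \<Rightarrow> bool" where
  "aluffi_torsion_free R J I \<longleftrightarrow>
     J \<subseteq> I \<and> (\<forall>n\<ge>1. J \<inter> ideal_pow R I n = ideal_prod R J (ideal_pow R I (n - 1)))"

definition strongly_aluffi_torsion_free :: "('a, 'b) ring_scheme \<Rightarrow> 'a list \<Rightarrow> 'a set \<Rightarrow> bool" where
  "strongly_aluffi_torsion_free R fs I \<longleftrightarrow>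
     (\<forall>i\<in>{1..length fs}. aluffi_torsion_free R (Idl\<^bsub>R\<^esub> (set (take i fs))) I)"

definition minimal_generating_list :: "('a, 'b) ring_scheme \<Rightarrow> 'a list \<Rightarrow> 'a set \<Rightarrow> bool" where
  "minimal_generating_list R fs J \<longleftrightarrow>
     set fs \<subseteq> carrier R \<and> distinct fs \<and> J = Idl\<^bsub>R\<^esub> (set fs) \<and>
     (\<forall>A. A \<subset> set fs \<longrightarrow> Idl\<^bsub>R\<^esub> A \<noteq> J)"

definition regular_sequence :: "('a, 'b) ring_scheme \<Rightarrow> 'a list \<Rightarrow> bool" where
  "regular_sequence R xs \<longleftrightarrow>
     set xs \<subseteq> carrier R \<and> Idl\<^bsub>R\<^esub> (set xs) \<noteq> carrier R \<and>
     (\<forall>i<length xs. \<forall>y\<in>carrier R.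
        xs ! i \<otimes>\<^bsub>R\<^esub> y \<in> Idl\<^bsub>R\<^esub> (set (take i xs)) \<longrightarrow> y \<in> Idl\<^bsub>R\<^esub> (set (take i xs)))"

definition quot_image :: "('a, 'b) ring_scheme \<Rightarrow> 'a set \<Rightarrow> 'a set \<Rightarrow> 'a set set" where
  "quot_image R K A = (\<lambda>a. a_r_coset R K a) ` A"

end

theory Submission imports Defs begin

no_notation Sum_Type.Plus (infixr \<open><+>\<close> 65)


context ring begin

lemma ideal_pow_ideal: "ideal A R \<Longrightarrow> ideal (ideal_pow R A n) R"
  by (induction n) (auto simp: oneideal ideal_prod_is_ideal)

lemma ideal_prod_mono1:
  assumes "A \<subseteq> A'" shows "A \<cdot> B \<subseteq> A' \<cdot> B"
proof
  fix x assume "x \<in> A \<cdot> B" then show "x \<in> A' \<cdot> B"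
    by (induction rule: ideal_prod.induct) (auto intro: ideal_prod.intros simp: subsetD[OF assms])
qed

lemma set_add_mem: "a \<in> A \<Longrightarrow> k \<in> K \<Longrightarrow> a \<oplus> k \<in> A <+> K"
  by (auto simp: set_add_def')

lemma set_add_memE: "x \<in> A <+> K \<Longrightarrow> (\<And>a k. a \<in> A \<Longrightarrow> k \<in> K \<Longrightarrow> x = a \<oplus> k \<Longrightarrow> P) \<Longrightarrow> P"
  by (auto simp: set_add_def')

lemma set_add_sub1: "ideal K R \<Longrightarrow> A \<subseteq> carrier R \<Longrightarrow> A \<subseteq> A <+> K"
proof
  fix a assume "ideal K R" "A \<subseteq> carrier R" "a \<in> A"
  then have "a \<oplus> \<zero> \<in> A <+> K"
    by (intro set_add_mem) (auto simp: additive_subgroup.zero_closed ideal.axioms(1))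
  then show "a \<in> A <+> K" using \<open>A \<subseteq> carrier R\<close> \<open>a \<in> A\<close> by auto
qed

lemma set_add_sub2: "ideal A R \<Longrightarrow> K \<subseteq> carrier R \<Longrightarrow> K \<subseteq> A <+> K"
proof
  fix a assume "ideal A R" "K \<subseteq> carrier R" "a \<in> K"
  then have "\<zero> \<oplus> a \<in> A <+> K"
    by (intro set_add_mem) (auto simp: additive_subgroup.zero_closed ideal.axioms(1))
  then show "a \<in> A <+> K" using \<open>K \<subseteq> carrier R\<close> \<open>a \<in> K\<close> by auto
qed

lemma set_add_least: "ideal C R \<Longrightarrow> A \<subseteq> C \<Longrightarrow> K \<subseteq> C \<Longrightarrow> A <+> K \<subseteq> C"
  by (auto simp: set_add_def' intro!: additive_subgroup.a_closed[OF ideal.axioms(1)])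

lemma set_add_mono: "A \<subseteq> A' \<Longrightarrow> K \<subseteq> K' \<Longrightarrow> A <+> K \<subseteq> A' <+> K'"
  by (auto simp: set_add_def')


end

context cring begin

lemma Idl_insert:
  assumes "f \<in> carrier R" "S \<subseteq> carrier R"
  shows "Idl (insert f S) = PIdl f <+> Idl S"
proof
  have i1: "ideal (PIdl f <+> Idl S) R"
    by (intro add_ideals cgenideal_ideal genideal_ideal assms)
  show "Idl (insert f S) \<subseteq> PIdl f <+> Idl S"
  proof (rule genideal_minimal[OF i1])
    have "f \<in> PIdl f <+> Idl S"
      using set_add_sub1[OF genideal_ideal[OF assms(2)], of "PIdl f"] cgenideal_self[OF assms(1)]
        ideal.Icarr[OF cgenideal_ideal[OF assms(1)]] by blast
    moreover have "S \<subseteq> PIdl f <+> Idl S"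
      using set_add_sub2[OF cgenideal_ideal[OF assms(1)], of "Idl S"] genideal_self[OF assms(2)]
        ideal.Icarr[OF genideal_ideal[OF assms(2)]] by blast
    ultimately show "insert f S \<subseteq> PIdl f <+> Idl S" by blast
  qed
next
  have c: "insert f S \<subseteq> carrier R" using assms by blast
  show "PIdl f <+> Idl S \<subseteq> Idl (insert f S)"
  proof (rule set_add_least[OF genideal_ideal[OF c]])
    show "PIdl f \<subseteq> Idl (insert f S)"
      by (rule cgenideal_minimal[OF genideal_ideal[OF c]]) (meson c genideal_self insert_subset)
    show "Idl S \<subseteq> Idl (insert f S)"
      by (rule subset_Idl_subset[OF c]) blast
  qed
qed


lemma PIdl_prod_mem:
  assumes "f \<in> carrier R" "ideal B R" "x \<in> (PIdl f) \<cdot> B"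
  shows "\<exists>b\<in>B. x = f \<otimes> b"
  using assms(3)
proof (induction rule: ideal_prod.induct)
  case (prod i j)
  from prod(1) obtain r where r: "r \<in> carrier R" "i = r \<otimes> f" unfolding cgenideal_def by blast
  have j: "j \<in> carrier R" using prod(2) assms(2) by (rule ideal.Icarr[rotated])
  have "i \<otimes> j = f \<otimes> (r \<otimes> j)" using r j assms(1) by (metis m_assoc m_comm)
  moreover have "r \<otimes> j \<in> B" using assms(2) r(1) prod(2) by (simp add: ideal.I_l_closed)
  ultimately show ?case by blast
next
  case (sum s1 s2)
  from sum.IH(1) obtain b1 where b1: "b1 \<in> B" "s1 = f \<otimes> b1" by blast
  from sum.IH(2) obtain b2 where b2: "b2 \<in> B" "s2 = f \<otimes> b2" by blast
  have c: "b1 \<in> carrier R" "b2 \<in> carrier R"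
    using b1(1) b2(1) assms(2) by (auto intro: ideal.Icarr[rotated])
  have "b1 \<oplus> b2 \<in> B" using b1(1) b2(1) assms(2)
    by (simp add: additive_subgroup.a_closed ideal.axioms(1))
  moreover have "s1 \<oplus> s2 = f \<otimes> (b1 \<oplus> b2)" using c assms(1) b1(2) b2(2) by (simp add: r_distr)
  ultimately show ?case by blast
qed

lemma ideal_minus_closed: "ideal C R \<Longrightarrow> a \<in> C \<Longrightarrow> b \<in> C \<Longrightarrow> a \<ominus> b \<in> C"
  by (simp add: a_minus_def additive_subgroup.a_closed additive_subgroup.a_inv_closed ideal.axioms(1))

lemma ideal_add_closed: "ideal C R \<Longrightarrow> a \<in> C \<Longrightarrow> b \<in> C \<Longrightarrow> a \<oplus> b \<in> C"
  by (simp add: additive_subgroup.a_closed ideal.axioms(1))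

lemma sum_ideal_subs:
  assumes "ideal A R" "ideal K R"
  shows "A \<subseteq> A <+> K" "K \<subseteq> A <+> K" "ideal (A <+> K) R"
  using set_add_sub1[OF assms(2)] set_add_sub2[OF assms(1)] add_ideals[OF assms]
    ideal.Icarr[OF assms(1)] ideal.Icarr[OF assms(2)] by blast+

lemma solve3:
  assumes "x = y \<oplus> (z \<oplus> k)" "y \<in> carrier R" "z \<in> carrier R" "k \<in> carrier R"
  shows "z = x \<ominus> y \<ominus> k"
proof -
  have "z = (y \<oplus> (z \<oplus> k)) \<ominus> y \<ominus> k" using assms(2-4) by algebra
  then show ?thesis using assms(1) by simp
qed

lemma solve2:
  assumes "z = u \<oplus> k" "u \<in> carrier R" "k \<in> carrier R"
  shows "u = z \<ominus> k"
proof -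
  have "u = (u \<oplus> k) \<ominus> k" using assms(2-3) by algebra
  then show ?thesis using assms(1) by simp
qed

lemma ideal_pow_carrier: "ideal A R \<Longrightarrow> ideal_pow R A n \<subseteq> carrier R"
  by (rule subsetI, rule ideal.Icarr[OF ideal_pow_ideal])

lemma prod_shift:
  assumes J2: "ideal J2 R" and I: "ideal I R" and f: "f \<in> I"
    and y: "y \<in> J2 \<cdot> ideal_pow R I p"
  shows "f \<otimes> y \<in> J2 \<cdot> ideal_pow R I (Suc p)"
proof -
  have P: "ideal (ideal_pow R I p) R" using ideal_pow_ideal[OF I] .
  have "f \<otimes> y \<in> I \<cdot> (J2 \<cdot> ideal_pow R I p)" using f y by (rule ideal_prod.prod)
  also have "I \<cdot> (J2 \<cdot> ideal_pow R I p) = (I \<cdot> J2) \<cdot> ideal_pow R I p"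
    using ideal_prod_assoc[OF I J2 P] by (rule sym)
  also have "\<dots> = (J2 \<cdot> I) \<cdot> ideal_pow R I p" using ideal_prod_commute[OF I J2] by (rule arg_cong)
  also have "\<dots> = J2 \<cdot> (I \<cdot> ideal_pow R I p)" using ideal_prod_assoc[OF J2 I P] .
  finally show ?thesis by (simp only: ideal_pow.simps)
qed

lemma step_lemma:
  assumes J2: "ideal J2 R" and I: "ideal I R" and K: "ideal K R" and JI: "J2 \<subseteq> I"
    and f: "f \<in> I"
    and a: "\<And>n x. n \<ge> 1 \<Longrightarrow> x \<in> J2 <+> (PIdl f <+> K) \<Longrightarrow> x \<in> ideal_pow R I n <+> (PIdl f <+> K)
              \<Longrightarrow> x \<in> J2 \<cdot> ideal_pow R I (n-1) <+> (PIdl f <+> K)"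
    and b: "\<And>n x. n \<ge> 1 \<Longrightarrow> x \<in> PIdl f <+> K \<Longrightarrow> x \<in> ideal_pow R I n <+> K
              \<Longrightarrow> \<exists>a\<in>ideal_pow R I (n-1). \<exists>k\<in>K. x = f \<otimes> a \<oplus> k"
    and c: "\<And>a. a \<in> carrier R \<Longrightarrow> f \<otimes> a \<in> J2 <+> K \<Longrightarrow> a \<in> J2 <+> K"
  shows "n \<ge> 1 \<Longrightarrow> x \<in> J2 <+> K \<Longrightarrow> x \<in> ideal_pow R I n <+> K
           \<Longrightarrow> x \<in> J2 \<cdot> ideal_pow R I (n-1) <+> K"
proof (induction n arbitrary: x)
  case 0 then show ?case by simp
next
  case (Suc m)
  have fc: "f \<in> carrier R" using ideal.Icarr[OF I f] .
  have PF: "ideal (PIdl f) R" using cgenideal_ideal[OF fc] .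
  have K': "ideal (PIdl f <+> K) R" using add_ideals[OF PF K] .
  have Pm: "ideal (ideal_pow R I m) R" using ideal_pow_ideal[OF I] .
  have PSm: "ideal (ideal_pow R I (Suc m)) R" using ideal_pow_ideal[OF I] .
  have JPm: "ideal (J2 \<cdot> ideal_pow R I m) R" using ideal_prod_is_ideal[OF J2 Pm] .
  show ?case
  proof (cases "m = 0")
    case True
    then show ?thesis using Suc.prems(2) ideal_prod_one[OF J2] by (simp add: True)
  next
    case False
    have JK: "ideal (J2 <+> K) R" using add_ideals[OF J2 K] .
    have PK: "ideal (ideal_pow R I (Suc m) <+> K) R" using add_ideals[OF PSm K] .
    have JPK: "ideal (J2 \<cdot> ideal_pow R I m <+> K) R" using add_ideals[OF JPm K] .
    have KK': "K \<subseteq> PIdl f <+> K" using sum_ideal_subs[OF PF K] by blast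
    have x1: "x \<in> J2 <+> (PIdl f <+> K)" using Suc.prems(2) set_add_mono[OF order_refl KK'] by blast
    have x2: "x \<in> ideal_pow R I (Suc m) <+> (PIdl f <+> K)" using Suc.prems(3) set_add_mono[OF order_refl KK'] by blast
    have "x \<in> J2 \<cdot> ideal_pow R I m <+> (PIdl f <+> K)" using a[OF _ x1 x2] by simp
    then obtain y z where y: "y \<in> J2 \<cdot> ideal_pow R I m" and z: "z \<in> PIdl f <+> K" and xyz: "x = y \<oplus> z"
      by (rule set_add_memE)
    from z obtain z1 k where z1: "z1 \<in> PIdl f" and k: "k \<in> K" and zz: "z = z1 \<oplus> k"
      by (rule set_add_memE)
    have yc: "y \<in> carrier R" using ideal.Icarr[OF JPm y] .
    have z1c: "z1 \<in> carrier R" using ideal.Icarr[OF PF z1] .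
    have kc: "k \<in> carrier R" using ideal.Icarr[OF K k] .
    have z1eq: "z1 = x \<ominus> y \<ominus> k" using solve3[OF _ yc z1c kc] xyz zz by simp
    have yJ: "y \<in> J2" using y ideal_prod_inter[OF J2 Pm] by blast
    have yP: "y \<in> ideal_pow R I (Suc m)" using y ideal_prod_mono1[OF JI, of "ideal_pow R I m"] by auto
    have "z1 \<in> J2 <+> K" unfolding z1eq
      by (intro ideal_minus_closed[OF JK] Suc.prems(2))
         (use yJ k sum_ideal_subs[OF J2 K] in blast)+
    have z1PK: "z1 \<in> ideal_pow R I (Suc m) <+> K" unfolding z1eq
      by (intro ideal_minus_closed[OF PK] Suc.prems(3))
         (use yP k sum_ideal_subs[OF PSm K] in blast)+
    have "z1 \<in> PIdl f <+> K" using z1 sum_ideal_subs[OF PF K] by blast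
    from b[OF _ this z1PK] obtain a k2 where aP: "a \<in> ideal_pow R I m" and k2: "k2 \<in> K"
      and z1a: "z1 = f \<otimes> a \<oplus> k2" by auto
    have ac: "a \<in> carrier R" using ideal.Icarr[OF Pm aP] .
    have k2c: "k2 \<in> carrier R" using ideal.Icarr[OF K k2] .
    have fac: "f \<otimes> a = z1 \<ominus> k2" using solve2[OF z1a _ k2c] fc ac by simp
    have "f \<otimes> a \<in> J2 <+> K" unfolding fac
      by (intro ideal_minus_closed[OF JK] \<open>z1 \<in> J2 <+> K\<close>) (use k2 sum_ideal_subs[OF J2 K] in blast)
    then have aJK: "a \<in> J2 <+> K" using c ac by blast
    have "a \<in> ideal_pow R I m <+> K" using aP sum_ideal_subs[OF Pm K] by blast
    then have "a \<in> J2 \<cdot> ideal_pow R I (m - 1) <+> K" using Suc.IH[OF _ aJK] False by simp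
    then obtain y' k3 where y': "y' \<in> J2 \<cdot> ideal_pow R I (m - 1)" and k3: "k3 \<in> K" and ayk: "a = y' \<oplus> k3"
      by (rule set_add_memE)
    obtain p where mp: "m = Suc p" using False by (cases m) auto
    have fy': "f \<otimes> y' \<in> J2 \<cdot> ideal_pow R I m" using prod_shift[OF J2 I f] y' mp by simp
    have y'c: "y' \<in> carrier R" using subsetD[OF ideal_prod_in_carrier[OF J2 ideal_pow_ideal[OF I]] y'] .
    have k3c: "k3 \<in> carrier R" using ideal.Icarr[OF K k3] .
    have fk3: "f \<otimes> k3 \<in> K" using k3 fc K by (simp add: ideal.I_l_closed)
    have xeq: "x = y \<oplus> (((f \<otimes> y' \<oplus> f \<otimes> k3) \<oplus> k2) \<oplus> k)"
      using xyz zz z1a ayk fc y'c k3c by (simp add: r_distr)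
    show ?thesis unfolding xeq diff_Suc_1
      using sum_ideal_subs[OF JPm K] y fy' fk3 k2 k
      by (intro ideal_add_closed[OF JPK]) blast+
  qed
qed

lemma quot_carrier: "ideal J R \<Longrightarrow> carrier (R Quot J) = (+>) J ` carrier R"
  by (auto simp: FactRing_def A_RCOSETS_def')

lemma quot_prod_image:
  assumes J: "ideal J R" and A: "ideal A R" and B: "ideal B R"
  shows "(+>) J ` (A \<cdot> B) = ideal_prod (R Quot J) ((+>) J ` A) ((+>) J ` B)"
proof -
  let ?h = "(+>) J"
  have hom: "?h \<in> ring_hom R (R Quot J)" using ideal.rcos_ring_hom[OF J] .
  show ?thesis
  proof
    show "?h ` (A \<cdot> B) \<subseteq> ideal_prod (R Quot J) (?h ` A) (?h ` B)"
    proof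
      fix s assume "s \<in> ?h ` (A \<cdot> B)"
      then obtain x where x: "x \<in> A \<cdot> B" "s = ?h x" by blast
      have "?h x \<in> ideal_prod (R Quot J) (?h ` A) (?h ` B)" using x(1)
      proof (induction rule: ideal_prod.induct)
        case (prod i j)
        have "?h (i \<otimes> j) = ?h i \<otimes>\<^bsub>R Quot J\<^esub> ?h j"
          using ring_hom_mult[OF hom ideal.Icarr[OF A prod(1)] ideal.Icarr[OF B prod(2)]] .
        then show ?case using prod by (auto intro: ideal_prod.prod)
      next
        case (sum s1 s2)
        have c1: "s1 \<in> carrier R" using subsetD[OF ideal_prod_in_carrier[OF A B] sum.hyps(1)] .
        have c2: "s2 \<in> carrier R" using subsetD[OF ideal_prod_in_carrier[OF A B] sum.hyps(2)] .
        have "?h (s1 \<oplus> s2) = ?h s1 \<oplus>\<^bsub>R Quot J\<^esub> ?h s2" using ring_hom_add[OF hom c1 c2] .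
        then show ?case using sum.IH by (auto intro: ideal_prod.sum)
      qed
      then show "s \<in> ideal_prod (R Quot J) (?h ` A) (?h ` B)" using x by simp
    qed
  next
    show "ideal_prod (R Quot J) (?h ` A) (?h ` B) \<subseteq> ?h ` (A \<cdot> B)"
    proof
      fix s assume "s \<in> ideal_prod (R Quot J) (?h ` A) (?h ` B)"
      then show "s \<in> ?h ` (A \<cdot> B)"
      proof (induction rule: ideal_prod.induct)
        case (prod i j)
        then obtain a b where ab: "a \<in> A" "b \<in> B" "i = ?h a" "j = ?h b" by blast
        have "i \<otimes>\<^bsub>R Quot J\<^esub> j = ?h (a \<otimes> b)"
          using ring_hom_mult[OF hom ideal.Icarr[OF A ab(1)] ideal.Icarr[OF B ab(2)]] ab(3,4) by simp
        moreover have "a \<otimes> b \<in> A \<cdot> B" using ab(1,2) by (rule ideal_prod.prod)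
        ultimately show ?case by blast
      next
        case (sum s1 s2)
        from sum.IH(1) obtain x1 where x1: "x1 \<in> A \<cdot> B" "s1 = ?h x1" by blast
        from sum.IH(2) obtain x2 where x2: "x2 \<in> A \<cdot> B" "s2 = ?h x2" by blast
        have c1: "x1 \<in> carrier R" using subsetD[OF ideal_prod_in_carrier[OF A B] x1(1)] .
        have c2: "x2 \<in> carrier R" using subsetD[OF ideal_prod_in_carrier[OF A B] x2(1)] .
        have "s1 \<oplus>\<^bsub>R Quot J\<^esub> s2 = ?h (x1 \<oplus> x2)" using ring_hom_add[OF hom c1 c2] x1(2) x2(2) by simp
        moreover have "x1 \<oplus> x2 \<in> A \<cdot> B" using x1(1) x2(1) by (rule ideal_prod.sum)
        ultimately show ?case by blast
      qed
    qed
  qed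
qed

lemma quot_pow_image:
  assumes J: "ideal J R" and A: "ideal A R"
  shows "(+>) J ` ideal_pow R A n = ideal_pow (R Quot J) ((+>) J ` A) n"
proof (induction n)
  case 0 show ?case using quot_carrier[OF J] by simp
next
  case (Suc n) then show ?case using quot_prod_image[OF J A ideal_pow_ideal[OF A]] by simp
qed

lemma quot_pull:
  assumes J: "ideal J R" and A: "ideal A R" and x: "x \<in> carrier R" and a: "a \<in> A"
    and eq: "J +> x = J +> a"
  shows "x \<in> A <+> J"
proof -
  have ac: "a \<in> carrier R" using ideal.Icarr[OF A a] .
  have "x \<ominus> a \<in> J" using quotient_eq_iff_same_a_r_cos[OF J x ac] eq by simp
  moreover have "x = a \<oplus> (x \<ominus> a)" using x ac by algebra
  ultimately show ?thesis using set_add_mem[OF a] by metis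
qed

lemma quot_add_kill:
  assumes J: "ideal J R" and a: "a \<in> carrier R" and k: "k \<in> J"
  shows "J +> (a \<oplus> k) = J +> a"
proof -
  have kc: "k \<in> carrier R" using ideal.Icarr[OF J k] .
  have "(a \<oplus> k) \<ominus> a = k" using a kc by algebra
  then have "(a \<oplus> k) \<ominus> a \<in> J" using k by simp
  then show ?thesis using quotient_eq_iff_same_a_r_cos[OF J _ a] a kc by simp
qed

lemma quot_Idl_image:
  assumes J: "ideal J R" and S: "S \<subseteq> carrier R"
  shows "(+>) J ` (Idl S) = genideal (R Quot J) ((+>) J ` S)"
proof
  have Q: "ring (R Quot J)" using ideal.quotient_is_ring[OF J] .
  have hS: "(+>) J ` S \<subseteq> carrier (R Quot J)" using quot_carrier[OF J] S by auto
  show "genideal (R Quot J) ((+>) J ` S) \<subseteq> (+>) J ` (Idl S)"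
    by (rule ring.genideal_minimal[OF Q ring_ideal_imp_quot_ideal[OF J genideal_ideal[OF S]]])
       (use genideal_self[OF S] in blast)
  have "ideal {r \<in> carrier R. J +> r \<in> genideal (R Quot J) ((+>) J ` S)} R"
    by (rule ring_hom_ring.ideal_vimage[OF ideal.rcos_ring_hom_ring[OF J] ring.genideal_ideal[OF Q hS]])
  moreover have "S \<subseteq> {r \<in> carrier R. J +> r \<in> genideal (R Quot J) ((+>) J ` S)}"
    using S ring.genideal_self[OF Q hS] by blast
  ultimately have "Idl S \<subseteq> {r \<in> carrier R. J +> r \<in> genideal (R Quot J) ((+>) J ` S)}"
    by (rule genideal_minimal)
  then show "(+>) J ` (Idl S) \<subseteq> genideal (R Quot J) ((+>) J ` S)" by blast
qed

end

context cring begin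

lemma main_lemma:
  fixes J1 J2 I :: "'a set" and fs :: "'a list"
  assumes "cring R" and "noetherian_ring R"
    and "ideal J1 R" and "ideal J2 R" and "ideal I R"
    and "J1 \<subseteq> I" and "J2 \<subseteq> I"
    and "aluffi_torsion_free (R Quot J1) (quot_image R J1 J2) (quot_image R J1 I)"
    and "minimal_generating_list R fs J1"
    and "strongly_aluffi_torsion_free R fs I"
    and "regular_sequence (R Quot J2) (map (\<lambda>f. a_r_coset R J2 f) fs)"
  shows "aluffi_torsion_free R J2 I"
proof -
  have J1: "ideal J1 R" and J2: "ideal J2 R" and I: "ideal I R" and J1I: "J1 \<subseteq> I" and JI: "J2 \<subseteq> I"
    using assms by auto
  have fsc: "set fs \<subseteq> carrier R" and J1eq: "J1 = Idl (set fs)"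
    using assms(9) unfolding minimal_generating_list_def by auto
  define K where "K k = Idl (set (take k fs))" for k
  have Sc: "set (take k fs) \<subseteq> carrier R" for k using fsc set_take_subset by fast
  have Kid: "ideal (K k) R" for k unfolding K_def by (rule genideal_ideal[OF Sc])
  define P where "P L \<longleftrightarrow> (\<forall>n x. n \<ge> 1 \<longrightarrow> x \<in> J2 <+> L \<longrightarrow> x \<in> ideal_pow R I n <+> L
      \<longrightarrow> x \<in> J2 \<cdot> ideal_pow R I (n-1) <+> L)" for L
  have ATF1: "\<forall>n\<ge>1. quot_image R J1 J2 \<inter> ideal_pow (R Quot J1) (quot_image R J1 I) n =
     ideal_prod (R Quot J1) (quot_image R J1 J2) (ideal_pow (R Quot J1) (quot_image R J1 I) (n - 1))"
    using assms(8) unfolding aluffi_torsion_free_def by blast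
  have base: "P J1" unfolding P_def
  proof (intro allI impI)
    fix n x assume n: "1 \<le> n" and x1: "x \<in> J2 <+> J1" and x2: "x \<in> ideal_pow R I n <+> J1"
    from x1 obtain j k where j: "j \<in> J2" and k: "k \<in> J1" and xjk: "x = j \<oplus> k" by (rule set_add_memE)
    from x2 obtain p k' where p: "p \<in> ideal_pow R I n" and k': "k' \<in> J1" and xpk: "x = p \<oplus> k'" by (rule set_add_memE)
    have jc: "j \<in> carrier R" using ideal.Icarr[OF J2 j] .
    have pc: "p \<in> carrier R" using subsetD[OF ideal_pow_carrier[OF I] p] .
    have kc: "k \<in> carrier R" using ideal.Icarr[OF J1 k] .
    have xc: "x \<in> carrier R" using xjk jc kc by simp
    have e1: "J1 +> x = J1 +> j" using quot_add_kill[OF J1 jc k] xjk by simp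
    have e2: "J1 +> x = J1 +> p" using quot_add_kill[OF J1 pc k'] xpk by simp
    have m1: "J1 +> x \<in> quot_image R J1 J2" unfolding quot_image_def using e1 j by auto
    have "J1 +> x \<in> (+>) J1 ` ideal_pow R I n" using e2 p by auto
    then have m2: "J1 +> x \<in> ideal_pow (R Quot J1) (quot_image R J1 I) n"
      unfolding quot_image_def using quot_pow_image[OF J1 I, of n] by simp
    have "J1 +> x \<in> ideal_prod (R Quot J1) (quot_image R J1 J2) (ideal_pow (R Quot J1) (quot_image R J1 I) (n - 1))"
      using ATF1 n m1 m2 by blast
    also have "\<dots> = (+>) J1 ` (J2 \<cdot> ideal_pow R I (n-1))"
      unfolding quot_image_def
      using quot_pow_image[OF J1 I, of "n-1"] quot_prod_image[OF J1 J2 ideal_pow_ideal[OF I]] by simp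
    finally obtain y where y: "y \<in> J2 \<cdot> ideal_pow R I (n-1)" and ey: "J1 +> x = J1 +> y" by auto
    show "x \<in> J2 \<cdot> ideal_pow R I (n - 1) <+> J1"
      using quot_pull[OF J1 ideal_prod_is_ideal[OF J2 ideal_pow_ideal[OF I]] xc y ey] .
  qed
  have all: "P (K k)" if "k \<le> length fs" for k
    using that
  proof (induction k rule: inc_induct)
    case base
    then show ?case using \<open>P J1\<close> J1eq unfolding K_def by simp
  next
    case (step k)
    let ?f = "fs ! k"
    have fset: "?f \<in> set fs" using step.hyps(2) by simp
    have fc: "?f \<in> carrier R" using fsc fset by blast
    have fJ1: "?f \<in> J1" using J1eq genideal_self[OF fsc] fset by blast
    have fI: "?f \<in> I" using fJ1 J1I by blast
    have KSuc: "K (Suc k) = PIdl ?f <+> K k"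
      unfolding K_def using take_Suc_conv_app_nth[OF step.hyps(2)] Idl_insert[OF fc Sc[of k]] by simp
    have PF: "ideal (PIdl ?f) R" using cgenideal_ideal[OF fc] .
    have a: "\<And>n x. n \<ge> 1 \<Longrightarrow> x \<in> J2 <+> (PIdl ?f <+> K k) \<Longrightarrow> x \<in> ideal_pow R I n <+> (PIdl ?f <+> K k)
              \<Longrightarrow> x \<in> J2 \<cdot> ideal_pow R I (n-1) <+> (PIdl ?f <+> K k)"
      using step.IH unfolding P_def KSuc by blast
    have ATFk: "aluffi_torsion_free R (K (Suc k)) I"
      using assms(10) step.hyps(2) unfolding strongly_aluffi_torsion_free_def K_def by auto
    have b: "\<exists>a\<in>ideal_pow R I (n-1). \<exists>kk\<in>K k. x = ?f \<otimes> a \<oplus> kk"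
      if n: "n \<ge> 1" and x1: "x \<in> PIdl ?f <+> K k" and x2: "x \<in> ideal_pow R I n <+> K k" for n x
    proof -
      from x2 obtain u k1 where u: "u \<in> ideal_pow R I n" and k1: "k1 \<in> K k" and xu: "x = u \<oplus> k1"
        by (rule set_add_memE)
      have uc: "u \<in> carrier R" using subsetD[OF ideal_pow_carrier[OF I] u] .
      have k1c: "k1 \<in> carrier R" using ideal.Icarr[OF Kid k1] .
      have Kk': "ideal (K (Suc k)) R" using Kid .
      have ueq: "u = x \<ominus> k1" using solve2[OF xu uc k1c] .
      have "u \<in> K (Suc k)" unfolding ueq KSuc
        by (intro ideal_minus_closed[OF add_ideals[OF PF Kid] x1])
           (use k1 sum_ideal_subs[OF PF Kid[of k]] in blast)
      then have "u \<in> K (Suc k) \<cdot> ideal_pow R I (n-1)"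
        using ATFk n u unfolding aluffi_torsion_free_def by blast
      also have "\<dots> = ((PIdl ?f) \<cdot> ideal_pow R I (n-1)) <+> (K k \<cdot> ideal_pow R I (n-1))"
        unfolding KSuc using ideal_prod_distr(2)[OF ideal_pow_ideal[OF I] PF Kid] .
      finally obtain v w where v: "v \<in> (PIdl ?f) \<cdot> ideal_pow R I (n-1)"
          and w: "w \<in> K k \<cdot> ideal_pow R I (n-1)" and uvw: "u = v \<oplus> w"
        by (rule set_add_memE)
      obtain a where a: "a \<in> ideal_pow R I (n-1)" and va: "v = ?f \<otimes> a"
        using PIdl_prod_mem[OF fc ideal_pow_ideal[OF I] v] by blast
      have wK: "w \<in> K k" using w ideal_prod_inter[OF Kid ideal_pow_ideal[OF I]] by blast
      have ac: "a \<in> carrier R" using subsetD[OF ideal_pow_carrier[OF I] a] .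
      have wc: "w \<in> carrier R" using ideal.Icarr[OF Kid wK] .
      have "x = ?f \<otimes> a \<oplus> (w \<oplus> k1)" using xu uvw va fc ac wc k1c by (simp add: a_assoc)
      moreover have "w \<oplus> k1 \<in> K k" using ideal_add_closed[OF Kid wK k1] .
      ultimately show ?thesis using a by blast
    qed
    have c: "a \<in> J2 <+> K k" if ac: "a \<in> carrier R" and fa: "?f \<otimes> a \<in> J2 <+> K k" for a
    proof -
      have reg: "\<forall>y\<in>carrier (R Quot J2).
          (map ((+>) J2) fs) ! k \<otimes>\<^bsub>R Quot J2\<^esub> y \<in> genideal (R Quot J2) (set (take k (map ((+>) J2) fs)))
          \<longrightarrow> y \<in> genideal (R Quot J2) (set (take k (map ((+>) J2) fs)))"
        using assms(11) step.hyps(2) unfolding regular_sequence_def by auto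
      have setk: "set (take k (map ((+>) J2) fs)) = (+>) J2 ` set (take k fs)"
        by (simp add: take_map)
      have Idlk: "genideal (R Quot J2) (set (take k (map ((+>) J2) fs))) = (+>) J2 ` K k"
        unfolding setk K_def using quot_Idl_image[OF J2 Sc[of k]] by simp
      from fa obtain j kk where j: "j \<in> J2" and kk: "kk \<in> K k" and fajk: "?f \<otimes> a = j \<oplus> kk"
        by (rule set_add_memE)
      have jc: "j \<in> carrier R" using ideal.Icarr[OF J2 j] .
      have kkc: "kk \<in> carrier R" using ideal.Icarr[OF Kid kk] .
      have "J2 +> (?f \<otimes> a) = J2 +> kk"
        using fajk quot_add_kill[OF J2 kkc j] jc kkc by (simp add: a_comm)
      moreover have "J2 +> (?f \<otimes> a) = (J2 +> ?f) \<otimes>\<^bsub>R Quot J2\<^esub> (J2 +> a)"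
        using ring_hom_mult[OF ideal.rcos_ring_hom[OF J2] fc ac] .
      ultimately have "(map ((+>) J2) fs) ! k \<otimes>\<^bsub>R Quot J2\<^esub> (J2 +> a) \<in> (+>) J2 ` K k"
        using step.hyps(2) kk by auto
      moreover have "J2 +> a \<in> carrier (R Quot J2)" using quot_carrier[OF J2] ac by auto
      ultimately have "J2 +> a \<in> (+>) J2 ` K k" using reg Idlk by auto
      then obtain b where b: "b \<in> K k" and ab: "J2 +> a = J2 +> b" by auto
      have "a \<in> K k <+> J2" using quot_pull[OF J2 Kid ac b ab] .
      then show ?thesis
        using set_add_comm[of "K k" J2] ideal.Icarr[OF Kid] ideal.Icarr[OF J2] by blast
    qed
    show ?case unfolding P_def
      using step_lemma[OF J2 I Kid JI fI a b c] by blast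
  qed
  have P0: "P (K 0)" using all by simp
  have K0: "K 0 \<subseteq> {\<zero>}" unfolding K_def by (simp add: genideal_minimal zeroideal)
  show ?thesis unfolding aluffi_torsion_free_def
  proof (intro conjI JI allI impI)
    fix n :: nat assume n: "1 \<le> n"
    then obtain m where nm: "n = Suc m" by (cases n) auto
    have Pm: "ideal (ideal_pow R I m) R" using ideal_pow_ideal[OF I] .
    show "J2 \<inter> ideal_pow R I n = J2 \<cdot> ideal_pow R I (n - 1)"
    proof
      show "J2 \<cdot> ideal_pow R I (n - 1) \<subseteq> J2 \<inter> ideal_pow R I n"
        using ideal_prod_inter[OF J2 Pm] ideal_prod_mono1[OF JI, of "ideal_pow R I m"] nm by auto
      show "J2 \<inter> ideal_pow R I n \<subseteq> J2 \<cdot> ideal_pow R I (n - 1)"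
      proof
        fix x assume x: "x \<in> J2 \<inter> ideal_pow R I n"
        have "x \<in> J2 <+> K 0" using x sum_ideal_subs[OF J2 Kid] by blast
        moreover have "x \<in> ideal_pow R I n <+> K 0" using x sum_ideal_subs[OF ideal_pow_ideal[OF I] Kid] by blast
        ultimately have "x \<in> J2 \<cdot> ideal_pow R I (n - 1) <+> K 0" using P0 n unfolding P_def by blast
        then obtain y z where y: "y \<in> J2 \<cdot> ideal_pow R I (n - 1)" and z: "z \<in> K 0" and xyz: "x = y \<oplus> z"
          by (rule set_add_memE)
        have "z = \<zero>" using z K0 by blast
        moreover have "y \<in> carrier R"
          using subsetD[OF ideal_prod_in_carrier[OF J2 ideal_pow_ideal[OF I]] y] .
        ultimately have "x = y" using xyz by simp
        then show "x \<in> J2 \<cdot> ideal_pow R I (n - 1)" using y by simp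
      qed
    qed
  qed
qed


end

theorem theorem2p15:
  fixes R :: "('a, 'b) ring_scheme" and J1 J2 I :: "'a set" and fs :: "'a list"
  assumes "cring R" and "noetherian_ring R"
    and "ideal J1 R" and "ideal J2 R" and "ideal I R"
    and "J1 \<subseteq> I" and "J2 \<subseteq> I"
    and "aluffi_torsion_free (R Quot J1) (quot_image R J1 J2) (quot_image R J1 I)"
    and "minimal_generating_list R fs J1"
    and "strongly_aluffi_torsion_free R fs I"
    and "regular_sequence (R Quot J2) (map (\<lambda>f. a_r_coset R J2 f) fs)"
  shows "aluffi_torsion_free R J2 I"
  by (rule cring.main_lemma[OF assms(1) assms])

end
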